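(* Let $a<b$ and $\ell_3>0$, and let $U(y,z)$ be a smooth real-valued function on $[a,b]\times\mathbb{R}$, $\ell_3$-periodic in $z$, satisfying $U_y=0$ at $y=a$ and at $y=b$. Let $A=\max_{y,z}|\nabla U|$ and $B=\max_{y,z}|\Delta U|$. Suppose $k\neq 0$ is real, $c=c_r+ic_i$ is complex with $c_i>0$, and there are smooth functions $u,v,w,p$ on $[a,b]\times\mathbb{R}$, $\ell_3$-periodic in $z$, not all identically zero, such that \[ ik(U-c)u+vU_y+wU_z=-ikp,\quad ik(U-c)v=-p_y,\quad ik(U-c)w=-p_z,\quad iku+v_y+w_z=0, \] with $v(a,z)=v(b,z)=0$ for all $z$. Then \[ (kc_i)^2\le 2A^2+Bc_i, \] equivalently $\left(kc_i-\frac{B}{2k}\right)^2\le 2A^2+\left(\frac{B}{2k}\right)^2$.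
   Context: Here $\nabla=(\partial_y,\partial_z)$ and $\Delta=\partial_y^2+\partial_z^2$. The system is the linearization of the 3D Euler equations in the channel $a\le y\le b$ (slip boundary condition, periodic in $x$ and $z$) about the steady shear $(U(y,z),0,0)$ with constant pressure, for perturbations of the form $e^{ik(x-ct)}(u,v,w,p)(y,z)+\text{c.c.}$; such $c$ is called an unstable eigenvalue with wave number $k$. *)

theory Defs
  imports "HOL-Analysis.Analysis"
begin

definition strip :: "real \<Rightarrow> real \<Rightarrow> (real \<times> real) set" where
  "strip a b = {a..b} \<times> UNIV"

definition dy :: "real \<Rightarrow> real \<Rightarrow> (real \<times> real \<Rightarrow> 'v::real_normed_vector) \<Rightarrow> real \<times> real \<Rightarrow> 'v" where
  "dy a b f = (\<lambda>(y,z). vector_derivative (\<lambda>t. f (t,z)) (at y within {a..b}))"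

definition dz :: "(real \<times> real \<Rightarrow> 'v::real_normed_vector) \<Rightarrow> real \<times> real \<Rightarrow> 'v" where
  "dz f = (\<lambda>(y,z). vector_derivative (\<lambda>t. f (y,t)) (at z))"

text \<open>Smooth (C-infinity) on the closed strip: there is a family D i j
  (playing the role of the i-th y-derivative and j-th z-derivative) with D 0 0 = f,
  all members continuous on the strip, and each member differentiable in y
  (one-sidedly at the walls) and in z with the expected derivatives.\<close>
definition smooth_strip :: "real \<Rightarrow> real \<Rightarrow> (real \<times> real \<Rightarrow> 'v::real_normed_vector) \<Rightarrow> bool" where
  "smooth_strip a b f \<longleftrightarrow> (\<exists>D :: nat \<Rightarrow> nat \<Rightarrow> real \<times> real \<Rightarrow> 'v.
      D 0 0 = f \<and>
      (\<forall>i j. continuous_on (strip a b) (D i j)) \<and>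
      (\<forall>i j y z. y \<in> {a..b} \<longrightarrow>
          ((\<lambda>t. D i j (t,z)) has_vector_derivative D (Suc i) j (y,z)) (at y within {a..b}) \<and>
          ((\<lambda>t. D i j (y,t)) has_vector_derivative D i (Suc j) (y,z)) (at z)))"

definition zperiodic :: "real \<Rightarrow> real \<Rightarrow> real \<Rightarrow> (real \<times> real \<Rightarrow> 'v) \<Rightarrow> bool" where
  "zperiodic a b l f \<longleftrightarrow> (\<forall>y z. y \<in> {a..b} \<longrightarrow> f (y, z + l) = f (y, z))"

end

theory Submission
  imports Defs
begin


lemma ibp:
  fixes h1 h1y h2 h2z :: "real\<times>real \<Rightarrow> real"
  assumes ab: "a \<le> b" and l: "0 \<le> l"
  and c1: "continuous_on (cbox (a,0) (b,l)) h1y" and c2: "continuous_on (cbox (a,0) (b,l)) h2z"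
  and d1: "\<And>y z. y \<in> {a..b} \<Longrightarrow> ((\<lambda>t. h1 (t,z)) has_vector_derivative h1y (y,z)) (at y within {a..b})"
  and d2: "\<And>y z. y \<in> {a..b} \<Longrightarrow> ((\<lambda>t. h2 (y,t)) has_vector_derivative h2z (y,z)) (at z)"
  and w: "\<And>z. h1 (b,z) = h1 (a,z)"
  and per: "\<And>y. y \<in> {a..b} \<Longrightarrow> h2 (y,l) = h2 (y,0)"
  shows "integral (cbox (a,0) (b,l)) (\<lambda>x. h1y x + h2z x) = 0"
proof -
  have i1: "integral (cbox (a,0) (b,l)) h1y = 0"
  proof -
    have "integral (cbox (a,0) (b,l)) h1y = integral (cbox a b) (\<lambda>y. integral (cbox 0 l) (\<lambda>z. h1y (y,z)))"
      by (rule integral_prod_continuous[OF c1])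
    also have "\<dots> = integral (cbox 0 l) (\<lambda>z. integral (cbox a b) (\<lambda>y. h1y (y,z)))"
      by (rule integral_swap_continuous[where f="\<lambda>y z. h1y (y,z)"]) (simp add: c1)
    also have "\<dots> = integral (cbox 0 l) (\<lambda>z. 0::real)"
    proof (rule integral_cong)
      fix z assume "z \<in> cbox 0 l"
      have "((\<lambda>y. h1y (y,z)) has_integral (h1 (b,z) - h1 (a,z))) {a..b}"
        by (rule fundamental_theorem_of_calculus[OF ab]) (rule d1)
      then show "integral (cbox a b) (\<lambda>y. h1y (y,z)) = 0" using w[of z] by (simp add: integral_unique)
    qed
    finally show ?thesis by simp
  qed
  have i2: "integral (cbox (a,0) (b,l)) h2z = 0"
  proof -
    have "integral (cbox (a,0) (b,l)) h2z = integral (cbox a b) (\<lambda>y. integral (cbox 0 l) (\<lambda>z. h2z (y,z)))"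
      by (rule integral_prod_continuous[OF c2])
    also have "\<dots> = integral (cbox a b) (\<lambda>z. 0::real)"
    proof (rule integral_cong)
      fix y assume y: "y \<in> cbox a b"
      have "((\<lambda>z. h2z (y,z)) has_integral (h2 (y,l) - h2 (y,0))) {0..l}"
        by (rule fundamental_theorem_of_calculus[OF l]) (rule has_vector_derivative_at_within, rule d2, use y in auto)
      then show "integral (cbox 0 l) (\<lambda>z. h2z (y,z)) = 0" using per[of y] y by (simp add: integral_unique)
    qed
    finally show ?thesis by simp
  qed
  have "integral (cbox (a,0) (b,l)) (\<lambda>x. h1y x + h2z x) = integral (cbox (a,0) (b,l)) h1y + integral (cbox (a,0) (b,l)) h2z"
    by (rule integral_add) (auto intro: integrable_continuous c1 c2)
  then show ?thesis using i1 i2 by simp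
qed



lemma hvd_inverse:
  fixes f :: "real \<Rightarrow> complex"
  assumes "(f has_vector_derivative f') (at x within S)" "f x \<noteq> 0"
  shows "((\<lambda>t. inverse (f t)) has_vector_derivative (- (inverse (f x) * f' * inverse (f x)))) (at x within S)"
proof -
  have "((\<lambda>t. inverse (f t)) has_derivative (\<lambda>h. - (inverse (f x) * (h *\<^sub>R f') * inverse (f x)))) (at x within S)"
    using Deriv.has_derivative_inverse[OF assms(2) assms(1)[unfolded has_vector_derivative_def]] .
  moreover have "(\<lambda>h. - (inverse (f x) * (h *\<^sub>R f') * inverse (f x))) = (\<lambda>h. h *\<^sub>R (- (inverse (f x) * f' * inverse (f x))))"
    by (auto simp: scaleR_conv_of_real algebra_simps)
  ultimately show ?thesis unfolding has_vector_derivative_def by simp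
qed

definition Hf :: "real \<Rightarrow> complex \<Rightarrow> real \<Rightarrow> real \<Rightarrow> complex \<Rightarrow> complex \<Rightarrow> complex" where
  "Hf k c U0 Ud P V = (let iW = inverse (of_real U0 - c); f = P * iW; Z = of_real Ud * iW; G = (- \<i> * of_real k) * V
     in cnj f * G - (f * cnj f) * Z)"

definition Hd :: "real \<Rightarrow> complex \<Rightarrow> real \<Rightarrow> real \<Rightarrow> complex \<Rightarrow> complex \<Rightarrow> real \<Rightarrow> real \<Rightarrow> complex \<Rightarrow> complex \<Rightarrow> complex" where
  "Hd k c U0 Ud P V U1 U2 P1 V1 = (let iW = inverse (of_real U0 - c); diW = - (iW * of_real U1 * iW);
     f = P * iW; fd = P * diW + P1 * iW; Z = of_real Ud * iW; Zd = of_real Ud * diW + of_real U2 * iW;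
     G = (- \<i> * of_real k) * V; Gd = (- \<i> * of_real k) * V1
     in (cnj f * Gd + cnj fd * G) - ((f * cnj f) * Zd + (f * cnj fd + fd * cnj f) * Z))"

lemma hder:
  fixes Uf Ud :: "real \<Rightarrow> real" and pf vf :: "real \<Rightarrow> complex"
  assumes dU: "(Uf has_vector_derivative U1) (at x within S)"
   and dUd: "(Ud has_vector_derivative U2) (at x within S)"
   and dp: "(pf has_vector_derivative p1) (at x within S)"
   and dv: "(vf has_vector_derivative v1) (at x within S)"
   and c: "Im c \<noteq> 0"
  shows "((\<lambda>t. Re (Hf k c (Uf t) (Ud t) (pf t) (vf t))) has_vector_derivative
           Re (Hd k c (Uf x) (Ud x) (pf x) (vf x) U1 U2 p1 v1)) (at x within S)"
proof -
  have ne: "of_real (Uf x) - c \<noteq> 0" using c by (auto simp: complex_eq_iff)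
  have dW: "((\<lambda>t. of_real (Uf t) - c) has_vector_derivative of_real U1) (at x within S)"
    using dU by (auto intro!: derivative_eq_intros simp: has_real_derivative_iff_has_vector_derivative)
  note dI = hvd_inverse[OF dW ne]
  have df: "((\<lambda>t. pf t * inverse (of_real (Uf t) - c)) has_vector_derivative
     pf x * (- (inverse (of_real (Uf x) - c) * of_real U1 * inverse (of_real (Uf x) - c))) + p1 * inverse (of_real (Uf x) - c)) (at x within S)"
    by (rule has_vector_derivative_mult[OF dp dI])
  have dUdc: "((\<lambda>t. complex_of_real (Ud t)) has_vector_derivative of_real U2) (at x within S)"
    using dUd by (auto intro!: derivative_eq_intros simp: has_real_derivative_iff_has_vector_derivative)
  have dZ: "((\<lambda>t. of_real (Ud t) * inverse (of_real (Uf t) - c)) has_vector_derivative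
     of_real (Ud x) * (- (inverse (of_real (Uf x) - c) * of_real U1 * inverse (of_real (Uf x) - c))) + of_real U2 * inverse (of_real (Uf x) - c)) (at x within S)"
    by (rule has_vector_derivative_mult[OF dUdc dI])
  have dG: "((\<lambda>t. (- \<i> * of_real k) * vf t) has_vector_derivative (- \<i> * of_real k) * v1) (at x within S)"
    by (rule has_vector_derivative_mult_right[OF dv])
  note dcf = has_vector_derivative_cnj[OF df]
  have dH: "((\<lambda>t. Hf k c (Uf t) (Ud t) (pf t) (vf t)) has_vector_derivative Hd k c (Uf x) (Ud x) (pf x) (vf x) U1 U2 p1 v1) (at x within S)"
    unfolding Hf_def Hd_def Let_def
    by (intro has_vector_derivative_diff has_vector_derivative_mult dcf dG df dZ)
  show ?thesis by (rule bounded_linear.has_vector_derivative[OF bounded_linear_Re dH])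
qed



lemma alg0:
  fixes f cf fy cfy fz cfz Z1 Z2 G1 G2 G1y G2z Z1y Z2z L k2 :: complex
  assumes "G1 = fy + f*Z1" "G2 = fz + f*Z2" "G2z = k2*f + G1*Z1 + G2*Z2 - G1y" "Z2z = L - Z1^2 - Z2^2 - Z1y"
  shows "(cf * G1y + cfy * G1) - ((f * cf) * Z1y + (f * cfy + fy * cf) * Z1)
       + ((cf * G2z + cfz * G2) - ((f * cf) * Z2z + (f * cfz + fz * cf) * Z2))
       = cfy*fy + cfz*fz + k2*(f*cf) + (f*cf)*(2*(Z1^2+Z2^2) - L)"
  unfolding assms by (simp add: algebra_simps power2_eq_square)

lemma alg:
  fixes U0 Uy Uz Uyy Uzz k A B :: real and c P Py Pz V Vy Wv Wz :: complex
  assumes ci: "Im c > 0"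
  and e2: "\<i> * of_real k * (of_real U0 - c) * V = - Py"
  and e3: "\<i> * of_real k * (of_real U0 - c) * Wv = - Pz"
  and e14: "(of_real U0 - c) * (Vy + Wz) = \<i> * of_real k * P + V * of_real Uy + Wv * of_real Uz"
  and A0: "Uy\<^sup>2 + Uz\<^sup>2 \<le> A\<^sup>2" and B0: "\<bar>Uyy + Uzz\<bar> \<le> B"
  shows "(cmod (P / (of_real U0 - c)))\<^sup>2 * (k\<^sup>2 - (2*A\<^sup>2/(Im c)\<^sup>2 + B/Im c))
     \<le> Re (Hd k c U0 Uy P V Uy Uyy Py Vy) + Re (Hd k c U0 Uz P Wv Uz Uzz Pz Wz)"
proof -
  define W where "W = of_real U0 - c"
  have Wne: "W \<noteq> 0" using ci by (auto simp: W_def complex_eq_iff)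
  define iW where "iW = inverse W"
  define f where "f = P * iW"
  define fy where "fy = P * (- (iW * of_real Uy * iW)) + Py * iW"
  define fz where "fz = P * (- (iW * of_real Uz * iW)) + Pz * iW"
  define Z1 where "Z1 = of_real Uy * iW"
  define Z2 where "Z2 = of_real Uz * iW"
  define Z1y where "Z1y = of_real Uy * (- (iW * of_real Uy * iW)) + of_real Uyy * iW"
  define Z2z where "Z2z = of_real Uz * (- (iW * of_real Uz * iW)) + of_real Uzz * iW"
  define G1 where "G1 = (- \<i> * of_real k) * V"
  define G2 where "G2 = (- \<i> * of_real k) * Wv"
  define G1y where "G1y = (- \<i> * of_real k) * Vy"
  define G2z where "G2z = (- \<i> * of_real k) * Wz"
  define L where "L = of_real (Uyy + Uzz) * iW"
  have iWW: "iW * W = 1" using Wne by (simp add: iW_def)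
  have r1: "G1 = fy + f*Z1"
  proof -
    have "G1 * W = Py" using e2 by (simp add: G1_def W_def algebra_simps)
    hence "G1 = Py * iW" using iWW by (metis mult.assoc mult.right_neutral mult.commute)
    thus ?thesis by (simp add: fy_def f_def Z1_def algebra_simps)
  qed
  have r2: "G2 = fz + f*Z2"
  proof -
    have "G2 * W = Pz" using e3 by (simp add: G2_def W_def algebra_simps)
    hence "G2 = Pz * iW" using iWW by (metis mult.assoc mult.right_neutral mult.commute)
    thus ?thesis by (simp add: fz_def f_def Z2_def algebra_simps)
  qed
  have r3: "G2z = of_real (k\<^sup>2) * f + G1*Z1 + G2*Z2 - G1y"
  proof -
    have "Vy + Wz = iW * (\<i> * of_real k * P + V * of_real Uy + Wv * of_real Uz)"
      using e14 iWW by (metis W_def mult.assoc mult.commute mult.left_neutral)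
    note eqv = this
    have "G1y + G2z = (- \<i> * of_real k) * (Vy + Wz)"
      by (simp add: G1y_def G2z_def algebra_simps)
    also have "\<dots> = (- \<i> * of_real k) * (iW * (\<i> * of_real k * P + V * of_real Uy + Wv * of_real Uz))"
      by (simp only: eqv)
    also have "\<dots> = of_real (k\<^sup>2) * f + G1*Z1 + G2*Z2"
      by (simp add: f_def G1_def G2_def Z1_def Z2_def algebra_simps power2_eq_square)
    finally show ?thesis by (simp add: algebra_simps)
  qed
  have r4: "Z2z = L - Z1^2 - Z2^2 - Z1y"
    by (simp add: Z2z_def L_def Z1_def Z2_def Z1y_def algebra_simps power2_eq_square)
  have hy: "Hd k c U0 Uy P V Uy Uyy Py Vy = (cnj f * G1y + cnj fy * G1) - ((f * cnj f) * Z1y + (f * cnj fy + fy * cnj f) * Z1)"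
    by (simp add: Hd_def Let_def iW_def W_def f_def fy_def G1_def G1y_def Z1_def Z1y_def)
  have hz: "Hd k c U0 Uz P Wv Uz Uzz Pz Wz = (cnj f * G2z + cnj fz * G2) - ((f * cnj f) * Z2z + (f * cnj fz + fz * cnj f) * Z2)"
    by (simp add: Hd_def Let_def iW_def W_def f_def fz_def G2_def G2z_def Z2_def Z2z_def)
  define X where "X = 2*(Z1^2+Z2^2) - L"
  have sum: "Hd k c U0 Uy P V Uy Uyy Py Vy + Hd k c U0 Uz P Wv Uz Uzz Pz Wz
     = cnj fy*fy + cnj fz*fz + of_real (k\<^sup>2)*(f*cnj f) + (f*cnj f)*X"
    unfolding hy hz X_def
    by (rule alg0[OF r1 r2 r3 r4, of "cnj f" "cnj fy" "cnj fz"])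
  have cm: "\<And>a. cnj a * a = of_real ((cmod a)\<^sup>2)" by (metis complex_norm_square mult.commute of_real_power)
  have cm2: "f * cnj f = of_real ((cmod f)\<^sup>2)" by (metis complex_norm_square of_real_power)
  have "Re (Hd k c U0 Uy P V Uy Uyy Py Vy) + Re (Hd k c U0 Uz P Wv Uz Uzz Pz Wz)
      = (cmod fy)\<^sup>2 + (cmod fz)\<^sup>2 + k\<^sup>2 * (cmod f)\<^sup>2 + (cmod f)\<^sup>2 * Re X"
    using arg_cong[OF sum, of Re] unfolding cm cm2 by simp
  moreover have "(cmod f)\<^sup>2 * Re X \<ge> - ((cmod f)\<^sup>2 * (2*A\<^sup>2/(Im c)\<^sup>2 + B/Im c))"
  proof -
    have WW: "cmod W \<ge> Im c" using abs_Im_le_cmod[of W] by (simp add: W_def)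
    have iWe: "cmod iW = 1 / cmod W" by (simp add: iW_def norm_inverse divide_inverse)
    have iWb: "cmod iW \<le> 1 / Im c" unfolding iWe using WW ci by (intro divide_left_mono) (simp, simp, rule mult_pos_pos, linarith, simp)
    have iW0: "cmod iW \<ge> 0" by simp
    have "cmod X \<le> 2 * (cmod Z1 ^ 2 + cmod Z2 ^ 2) + cmod L"
    proof -
      have "cmod X \<le> cmod (2*(Z1^2+Z2^2)) + cmod L" unfolding X_def by (rule norm_triangle_ineq4)
      moreover have "cmod (Z1^2+Z2^2) \<le> cmod (Z1^2) + cmod (Z2^2)" by (rule norm_triangle_ineq)
      moreover have "cmod (2*(Z1^2+Z2^2)) = 2 * cmod (Z1^2+Z2^2)" by (simp only: norm_mult) simp
      moreover have "cmod (Z1^2) = cmod Z1 ^ 2" "cmod (Z2^2) = cmod Z2 ^ 2" by (simp_all add: norm_power)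
      ultimately show ?thesis by (smt (verit))
    qed
    also have "cmod Z1 ^ 2 + cmod Z2 ^ 2 = (Uy\<^sup>2 + Uz\<^sup>2) * (cmod iW)\<^sup>2"
      by (simp add: Z1_def Z2_def norm_mult power_mult_distrib algebra_simps)
    also have "\<dots> \<le> A\<^sup>2 * (1/Im c)\<^sup>2"
      by (rule mult_mono[OF A0 power_mono[OF iWb iW0]]) simp_all
    also have "cmod L = \<bar>Uyy + Uzz\<bar> * cmod iW" unfolding L_def norm_mult norm_of_real ..
    also have "\<dots> \<le> B * (1/Im c)"
      by (rule mult_mono[OF B0 iWb]) (use B0 in linarith, simp)
    finally have "cmod X \<le> 2*A\<^sup>2/(Im c)\<^sup>2 + B/Im c" by (simp add: power_divide)
    moreover have "- cmod X \<le> Re X" using abs_Re_le_cmod[of X] by linarith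
    ultimately have "- (2*A\<^sup>2/(Im c)\<^sup>2 + B/Im c) \<le> Re X" by linarith
    thus ?thesis by (metis mult_left_mono mult_minus_right zero_le_power2)
  qed
  ultimately show ?thesis by (simp add: f_def iW_def W_def divide_inverse algebra_simps)
qed



lemma per_nat:
  assumes "zperiodic a b l f" "y \<in> {a..b}"
  shows "f (y, z + real n * l) = f (y, z)"
proof (induction n)
  case (Suc n)
  have "f (y, z + real (Suc n) * l) = f (y, (z + real n * l) + l)" by (simp add: algebra_simps)
  also have "\<dots> = f (y, z + real n * l)" using assms by (simp add: zperiodic_def)
  finally show ?case using Suc by simp
qed simp

lemma per_cell:
  assumes l: "l > 0" and p: "zperiodic a b l f" and y: "y \<in> {a..b}"
  shows "\<exists>z'\<in>{0..l}. f (y, z') = f (y, z)"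
proof -
  define m where "m = \<lfloor>z / l\<rfloor>"
  define z' where "z' = z - of_int m * l"
  have fc: "of_int m \<le> z / l" "z / l < of_int m + 1" using floor_correct[of "z/l"] by (auto simp: m_def)
  have "of_int m * l \<le> z / l * l" by (rule mult_right_mono[OF fc(1)]) (use l in simp)
  hence z0: "0 \<le> z'" using l by (simp add: z'_def)
  have "z / l * l < (of_int m + 1) * l" by (rule mult_strict_right_mono[OF fc(2) l])
  hence z1: "z' \<le> l" using l by (simp add: z'_def algebra_simps)
  have "f (y, z') = f (y, z)"
  proof (cases "m \<ge> 0")
    case True
    have "z = z' + real (nat m) * l" using True by (simp add: z'_def)
    then show ?thesis using per_nat[OF p y, of z' "nat m"] by simp
  next
    case False
    have "z' = z + real (nat (-m)) * l" using False by (simp add: z'_def)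
    then show ?thesis using per_nat[OF p y, of z "nat (-m)"] by simp
  qed
  thus ?thesis using z0 z1 by auto
qed

lemma cell_sub: "cbox (a,0) (b,l) \<subseteq> strip a b"
  by (auto simp: strip_def)

lemma per_bdd:
  fixes g :: "real \<times> real \<Rightarrow> real"
  assumes l: "l > 0" and c: "continuous_on (strip a b) g" and p: "zperiodic a b l g"
  shows "bdd_above (g ` strip a b)"
proof -
  have "compact (g ` cbox (a,0) (b,l))"
    by (rule compact_continuous_image[OF continuous_on_subset[OF c cell_sub]]) simp
  hence bd: "bdd_above (g ` cbox (a,0) (b,l))" by (intro bounded_imp_bdd_above compact_imp_bounded)
  have "g ` strip a b \<subseteq> g ` cbox (a,0) (b,l)"
  proof
    fix x assume "x \<in> g ` strip a b"
    then obtain y z where yz: "y \<in> {a..b}" "x = g (y,z)" by (auto simp: strip_def)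
    obtain z' where "z' \<in> {0..l}" "g (y,z') = g (y,z)" using per_cell[OF l p yz(1)] by blast
    thus "x \<in> g ` cbox (a,0) (b,l)" using yz by (auto intro!: image_eqI[of _ _ "(y,z')"])
  qed
  thus ?thesis using bd by (metis bdd_above_mono)
qed

lemma per_dy:
  fixes f g :: "real \<times> real \<Rightarrow> 'v::euclidean_space"
  assumes ab: "a < b" and p: "zperiodic a b l f"
    and d: "\<And>y z. y \<in> {a..b} \<Longrightarrow> ((\<lambda>t. f (t,z)) has_vector_derivative g (y,z)) (at y within {a..b})"
  shows "zperiodic a b l g"
  unfolding zperiodic_def
proof (intro allI impI)
  fix y z assume y: "y \<in> {a..b}"
  have "((\<lambda>t. f (t,z)) has_vector_derivative g (y,z+l)) (at y within {a..b})"
    by (rule has_vector_derivative_transform_within[OF d[OF y, of "z+l"] zero_less_one y])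
       (use p in \<open>auto simp: zperiodic_def\<close>)
  thus "g (y, z + l) = g (y, z)"
    using vector_derivative_within_closed_interval[OF ab y] d[OF y, of z] by metis
qed

lemma per_dz:
  fixes f g :: "real \<times> real \<Rightarrow> 'v::euclidean_space"
  assumes p: "zperiodic a b l f"
    and d: "\<And>y z. y \<in> {a..b} \<Longrightarrow> ((\<lambda>t. f (y,t)) has_vector_derivative g (y,z)) (at z)"
  shows "zperiodic a b l g"
  unfolding zperiodic_def
proof (intro allI impI)
  fix y z assume y: "y \<in> {a..b}"
  have sh: "((\<lambda>t. t + l) has_vector_derivative 1) (at z)"
    by (auto intro!: derivative_eq_intros)
  have "(((\<lambda>t. f (y,t)) \<circ> (\<lambda>t. t + l)) has_vector_derivative (1 *\<^sub>R g (y,z+l))) (at z)"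
    by (rule vector_diff_chain_at[OF sh]) (simp add: d[OF y])
  moreover have "((\<lambda>t. f (y,t)) \<circ> (\<lambda>t. t + l)) = (\<lambda>t. f (y,t))"
    using p y by (auto simp: zperiodic_def)
  ultimately have "((\<lambda>t. f (y,t)) has_vector_derivative g (y,z+l)) (at z)" by simp
  thus "g (y, z + l) = g (y, z)" using vector_derivative_unique_at d[OF y, of z] by blast
qed

lemma Dfacts:
  fixes D :: "nat \<Rightarrow> nat \<Rightarrow> real \<times> real \<Rightarrow> 'v::euclidean_space"
  assumes ab: "a < b" and D0: "D 0 0 = f"
    and d: "\<forall>i j y z. y \<in> {a..b} \<longrightarrow>
          ((\<lambda>t. D i j (t,z)) has_vector_derivative D (Suc i) j (y,z)) (at y within {a..b}) \<and>
          ((\<lambda>t. D i j (y,t)) has_vector_derivative D i (Suc j) (y,z)) (at z)"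
    and y: "y \<in> {a..b}"
  shows "dy a b f (y,z) = D 1 0 (y,z)" "dz f (y,z) = D 0 1 (y,z)"
    "dy a b (dy a b f) (y,z) = D 2 0 (y,z)" "dz (dz f) (y,z) = D 0 2 (y,z)"
proof -
  have dy1: "\<And>y z. y \<in> {a..b} \<Longrightarrow> dy a b f (y,z) = D 1 0 (y,z)"
    unfolding dy_def using d D0 by (auto intro!: vector_derivative_within_closed_interval[OF ab])
  have dz1: "\<And>y z. y \<in> {a..b} \<Longrightarrow> dz f (y,z) = D 0 1 (y,z)"
    unfolding dz_def using d D0 by (auto intro!: vector_derivative_at)
  show "dy a b f (y,z) = D 1 0 (y,z)" "dz f (y,z) = D 0 1 (y,z)" using dy1 dz1 y by auto
  have "((\<lambda>t. dy a b f (t,z)) has_vector_derivative D 2 0 (y,z)) (at y within {a..b})"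
    by (rule has_vector_derivative_transform_within[OF _ zero_less_one y, of "\<lambda>t. D 1 0 (t,z)"])
      (use d y dy1 in \<open>auto simp: numeral_2_eq_2\<close>)
  thus "dy a b (dy a b f) (y,z) = D 2 0 (y,z)"
    unfolding dy_def[of a b "dy a b f"] using vector_derivative_within_closed_interval[OF ab y] by auto
  have "(\<lambda>t. dz f (y,t)) = (\<lambda>t. D 0 1 (y,t))" using dz1 y by auto
  moreover have "((\<lambda>t. D 0 1 (y,t)) has_vector_derivative D 0 2 (y,z)) (at z)"
    using d y by (auto simp: numeral_2_eq_2)
  ultimately show "dz (dz f) (y,z) = D 0 2 (y,z)"
    unfolding dz_def[of "dz f"] by (auto intro!: vector_derivative_at)
qed

lemma box_ne: "(a::real) < b \<Longrightarrow> 0 < (l::real) \<Longrightarrow> box (a,0) (b,l) \<noteq> {}"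
  unfolding box_eq_empty Basis_prod_def by auto


lemma cont_Hd:
  assumes "continuous_on S U0" "continuous_on S Ud" "continuous_on S P" "continuous_on S V"
    "continuous_on S U1" "continuous_on S U2" "continuous_on S P1" "continuous_on S V1"
    and ne: "\<And>r. complex_of_real r - c \<noteq> 0"
  shows "continuous_on S (\<lambda>x. Re (Hd k c (U0 x) (Ud x) (P x) (V x) (U1 x) (U2 x) (P1 x) (V1 x)))"
  unfolding Hd_def Let_def
  by (intro continuous_on_Re continuous_on_diff continuous_on_add continuous_on_mult continuous_on_cnj
      continuous_on_minus continuous_on_inverse continuous_on_of_real continuous_on_const assms ballI)


theorem theorem3:
  fixes a b l3 k :: real and c :: complex
    and U :: "real \<times> real \<Rightarrow> real"
    and u v w p :: "real \<times> real \<Rightarrow> complex"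
  assumes ab: "a < b" and l3: "l3 > 0"
    and U_smooth: "smooth_strip a b U" and U_per: "zperiodic a b l3 U"
    and U_wall: "\<forall>z. dy a b U (a,z) = 0 \<and> dy a b U (b,z) = 0"
    and k: "k \<noteq> 0" and ci: "Im c > 0"
    and sm: "smooth_strip a b u" "smooth_strip a b v" "smooth_strip a b w" "smooth_strip a b p"
    and per: "zperiodic a b l3 u" "zperiodic a b l3 v" "zperiodic a b l3 w" "zperiodic a b l3 p"
    and nontriv: "\<exists>q\<in>strip a b. u q \<noteq> 0 \<or> v q \<noteq> 0 \<or> w q \<noteq> 0 \<or> p q \<noteq> 0"
    and eq1: "\<forall>q\<in>strip a b. \<i> * of_real k * (of_real (U q) - c) * u q
                 + v q * of_real (dy a b U q) + w q * of_real (dz U q) = - \<i> * of_real k * p q"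
    and eq2: "\<forall>q\<in>strip a b. \<i> * of_real k * (of_real (U q) - c) * v q = - dy a b p q"
    and eq3: "\<forall>q\<in>strip a b. \<i> * of_real k * (of_real (U q) - c) * w q = - dz p q"
    and eq4: "\<forall>q\<in>strip a b. \<i> * of_real k * u q + dy a b v q + dz w q = 0"
    and bc: "\<forall>z. v (a,z) = 0 \<and> v (b,z) = 0"
    and A_def: "A = (SUP q\<in>strip a b. sqrt ((dy a b U q)\<^sup>2 + (dz U q)\<^sup>2))"
    and B_def: "B = (SUP q\<in>strip a b. \<bar>dy a b (dy a b U) q + dz (dz U) q\<bar>)"
  shows "(k * Im c)\<^sup>2 \<le> 2 * A\<^sup>2 + B * Im c"
proof -
  obtain DU where DU0: "DU 0 0 = U" and DUc: "\<forall>i j. continuous_on (strip a b) (DU i j)"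
    and DUd: "\<forall>i j y z. y \<in> {a..b} \<longrightarrow>
          ((\<lambda>t. DU i j (t,z)) has_vector_derivative DU (Suc i) j (y,z)) (at y within {a..b}) \<and>
          ((\<lambda>t. DU i j (y,t)) has_vector_derivative DU i (Suc j) (y,z)) (at z)"
    using U_smooth unfolding smooth_strip_def by blast
  obtain Dp where Dp0: "Dp 0 0 = p" and Dpc: "\<forall>i j. continuous_on (strip a b) (Dp i j)"
    and Dpd: "\<forall>i j y z. y \<in> {a..b} \<longrightarrow>
          ((\<lambda>t. Dp i j (t,z)) has_vector_derivative Dp (Suc i) j (y,z)) (at y within {a..b}) \<and>
          ((\<lambda>t. Dp i j (y,t)) has_vector_derivative Dp i (Suc j) (y,z)) (at z)"
    using sm(4) unfolding smooth_strip_def by blast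
  obtain Dv where Dv0: "Dv 0 0 = v" and Dvc: "\<forall>i j. continuous_on (strip a b) (Dv i j)"
    and Dvd: "\<forall>i j y z. y \<in> {a..b} \<longrightarrow>
          ((\<lambda>t. Dv i j (t,z)) has_vector_derivative Dv (Suc i) j (y,z)) (at y within {a..b}) \<and>
          ((\<lambda>t. Dv i j (y,t)) has_vector_derivative Dv i (Suc j) (y,z)) (at z)"
    using sm(2) unfolding smooth_strip_def by blast
  obtain Dw where Dw0: "Dw 0 0 = w" and Dwc: "\<forall>i j. continuous_on (strip a b) (Dw i j)"
    and Dwd: "\<forall>i j y z. y \<in> {a..b} \<longrightarrow>
          ((\<lambda>t. Dw i j (t,z)) has_vector_derivative Dw (Suc i) j (y,z)) (at y within {a..b}) \<and>
          ((\<lambda>t. Dw i j (y,t)) has_vector_derivative Dw i (Suc j) (y,z)) (at z)"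
    using sm(3) unfolding smooth_strip_def by blast
  have stripI: "\<And>y z. (y,z) \<in> strip a b \<longleftrightarrow> y \<in> {a..b}" by (simp add: strip_def)
  have FU: "\<And>q. q \<in> strip a b \<Longrightarrow> dy a b U q = DU 1 0 q \<and> dz U q = DU 0 1 q \<and>
      dy a b (dy a b U) q = DU 2 0 q \<and> dz (dz U) q = DU 0 2 q"
    subgoal for q using Dfacts[OF ab DU0 DUd, of "fst q" "snd q"] by (cases q) (auto simp: strip_def)
    done
  have Fp: "\<And>q. q \<in> strip a b \<Longrightarrow> dy a b p q = Dp 1 0 q \<and> dz p q = Dp 0 1 q"
    subgoal for q using Dfacts[OF ab Dp0 Dpd, of "fst q" "snd q"] by (cases q) (auto simp: strip_def)
    done
  have Fv: "\<And>q. q \<in> strip a b \<Longrightarrow> dy a b v q = Dv 1 0 q"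
    subgoal for q using Dfacts[OF ab Dv0 Dvd, of "fst q" "snd q"] by (cases q) (auto simp: strip_def)
    done
  have Fw: "\<And>q. q \<in> strip a b \<Longrightarrow> dz w q = Dw 0 1 q"
    subgoal for q using Dfacts[OF ab Dw0 Dwd, of "fst q" "snd q"] by (cases q) (auto simp: strip_def)
    done
  have Wne: "\<And>r. complex_of_real r - c \<noteq> 0" using ci by (auto simp: complex_eq_iff)
  have dUy: "y \<in> {a..b} \<Longrightarrow> ((\<lambda>t. U (t,z)) has_vector_derivative DU 1 0 (y,z)) (at y within {a..b})" for y z
    using conjunct1[OF DUd[rule_format, where i=0 and j=0 and y=y and z=z]] by (simp_all add: DU0 numeral_2_eq_2)
  have dUz: "y \<in> {a..b} \<Longrightarrow> ((\<lambda>t. U (y,t)) has_vector_derivative DU 0 1 (y,z)) (at z)" for y z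
    using conjunct2[OF DUd[rule_format, where i=0 and j=0 and y=y and z=z]] by (simp_all add: DU0 numeral_2_eq_2)
  have dUyy: "y \<in> {a..b} \<Longrightarrow> ((\<lambda>t. DU 1 0 (t,z)) has_vector_derivative DU 2 0 (y,z)) (at y within {a..b})" for y z
    using conjunct1[OF DUd[rule_format, where i=1 and j=0 and y=y and z=z]] by (simp_all add: DU0 numeral_2_eq_2)
  have dUzz: "y \<in> {a..b} \<Longrightarrow> ((\<lambda>t. DU 0 1 (y,t)) has_vector_derivative DU 0 2 (y,z)) (at z)" for y z
    using conjunct2[OF DUd[rule_format, where i=0 and j=1 and y=y and z=z]] by (simp_all add: DU0 numeral_2_eq_2)
  have dpy: "y \<in> {a..b} \<Longrightarrow> ((\<lambda>t. p (t,z)) has_vector_derivative Dp 1 0 (y,z)) (at y within {a..b})" for y z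
    using conjunct1[OF Dpd[rule_format, where i=0 and j=0 and y=y and z=z]] by (simp_all add: Dp0 numeral_2_eq_2)
  have dpz: "y \<in> {a..b} \<Longrightarrow> ((\<lambda>t. p (y,t)) has_vector_derivative Dp 0 1 (y,z)) (at z)" for y z
    using conjunct2[OF Dpd[rule_format, where i=0 and j=0 and y=y and z=z]] by (simp_all add: Dp0 numeral_2_eq_2)
  have dvy: "y \<in> {a..b} \<Longrightarrow> ((\<lambda>t. v (t,z)) has_vector_derivative Dv 1 0 (y,z)) (at y within {a..b})" for y z
    using conjunct1[OF Dvd[rule_format, where i=0 and j=0 and y=y and z=z]] by (simp_all add: Dv0 numeral_2_eq_2)
  have dwz: "y \<in> {a..b} \<Longrightarrow> ((\<lambda>t. w (y,t)) has_vector_derivative Dw 0 1 (y,z)) (at z)" for y z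
    using conjunct2[OF Dwd[rule_format, where i=0 and j=0 and y=y and z=z]] by (simp_all add: Dw0 numeral_2_eq_2)
  have perUy: "zperiodic a b l3 (DU 1 0)" by (rule per_dy[OF ab U_per dUy])
  have perUz: "zperiodic a b l3 (DU 0 1)" by (rule per_dz[OF U_per dUz])
  have perUyy: "zperiodic a b l3 (DU 2 0)" by (rule per_dy[OF ab perUy dUyy])
  have perUzz: "zperiodic a b l3 (DU 0 2)" by (rule per_dz[OF perUz dUzz])
  have cU: "continuous_on (strip a b) U" using DUc DU0 by metis
  have cUy: "continuous_on (strip a b) (DU 1 0)" "continuous_on (strip a b) (DU 0 1)"
     "continuous_on (strip a b) (DU 2 0)" "continuous_on (strip a b) (DU 0 2)" using DUc by auto
  have cp: "continuous_on (strip a b) p" "continuous_on (strip a b) (Dp 1 0)" "continuous_on (strip a b) (Dp 0 1)"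
    using Dpc Dp0 by metis+
  have cv: "continuous_on (strip a b) v" "continuous_on (strip a b) (Dv 1 0)"
    using Dvc Dv0 by metis+
  have cw: "continuous_on (strip a b) w" "continuous_on (strip a b) (Dw 0 1)"
    using Dwc Dw0 by metis+
  define gA where "gA = (\<lambda>q. sqrt ((DU 1 0 q)\<^sup>2 + (DU 0 1 q)\<^sup>2))"
  define gB where "gB = (\<lambda>q. \<bar>DU 2 0 q + DU 0 2 q\<bar>)"
  have Aeq: "A = (SUP q\<in>strip a b. gA q)" unfolding A_def gA_def
    by (rule SUP_cong) (use FU in auto)
  have Beq: "B = (SUP q\<in>strip a b. gB q)" unfolding B_def gB_def
    by (rule SUP_cong) (use FU in auto)
  have bA: "bdd_above (gA ` strip a b)"
    by (rule per_bdd[OF l3]) (use perUy perUz cUy in \<open>auto simp: gA_def zperiodic_def intro!: continuous_intros\<close>)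
  have bB: "bdd_above (gB ` strip a b)"
    by (rule per_bdd[OF l3]) (use perUyy perUzz cUy in \<open>auto simp: gB_def zperiodic_def intro!: continuous_intros\<close>)
  have A0: "(DU 1 0 q)\<^sup>2 + (DU 0 1 q)\<^sup>2 \<le> A\<^sup>2" if q: "q \<in> strip a b" for q
  proof -
    have "gA q \<le> A" unfolding Aeq by (rule cSUP_upper[OF q bA])
    moreover have "0 \<le> gA q" by (simp add: gA_def)
    ultimately have "(gA q)\<^sup>2 \<le> A\<^sup>2" by (rule power_mono)
    thus ?thesis by (simp add: gA_def)
  qed
  have B0: "\<bar>DU 2 0 q + DU 0 2 q\<bar> \<le> B" if q: "q \<in> strip a b" for q
    using cSUP_upper[OF q bB] unfolding Beq gB_def by simp
  define h1 where "h1 = (\<lambda>q. Re (Hf k c (U q) (DU 1 0 q) (p q) (v q)))"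
  define h1y where "h1y = (\<lambda>q. Re (Hd k c (U q) (DU 1 0 q) (p q) (v q) (DU 1 0 q) (DU 2 0 q) (Dp 1 0 q) (Dv 1 0 q)))"
  define h2 where "h2 = (\<lambda>q. Re (Hf k c (U q) (DU 0 1 q) (p q) (w q)))"
  define h2z where "h2z = (\<lambda>q. Re (Hd k c (U q) (DU 0 1 q) (p q) (w q) (DU 0 1 q) (DU 0 2 q) (Dp 0 1 q) (Dw 0 1 q)))"
  have d1: "((\<lambda>t. h1 (t,z)) has_vector_derivative h1y (y,z)) (at y within {a..b})" if y: "y \<in> {a..b}" for y z
    unfolding h1_def h1y_def
    by (rule hder[where Uf="\<lambda>t. U (t,z)" and Ud="\<lambda>t. DU 1 0 (t,z)" and pf="\<lambda>t. p (t,z)" and vf="\<lambda>t. v (t,z)",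
          OF dUy[OF y] dUyy[OF y] dpy[OF y] dvy[OF y]]) (use ci in simp)
  have d2: "((\<lambda>t. h2 (y,t)) has_vector_derivative h2z (y,z)) (at z)" if y: "y \<in> {a..b}" for y z
    using hder[where Uf="\<lambda>t. U (y,t)" and Ud="\<lambda>t. DU 0 1 (y,t)" and pf="\<lambda>t. p (y,t)" and vf="\<lambda>t. w (y,t)"
          and S=UNIV, OF dUz[OF y] dUzz[OF y] dpz[OF y] dwz[OF y]] ci
    unfolding h2_def h2z_def by simp
  have c1: "continuous_on (strip a b) h1y"
    unfolding h1y_def by (rule cont_Hd[OF cU cUy(1) cp(1) cv(1) cUy(1) cUy(3) cp(2) cv(2) Wne])
  have c2: "continuous_on (strip a b) h2z"
    unfolding h2z_def by (rule cont_Hd[OF cU cUy(2) cp(1) cw(1) cUy(2) cUy(4) cp(3) cw(2) Wne])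
  have wall: "h1 (b,z) = h1 (a,z)" for z
  proof -
    have "DU 1 0 (a,z) = 0" "DU 1 0 (b,z) = 0" using U_wall FU[of "(a,z)"] FU[of "(b,z)"] ab
      by (auto simp: strip_def)
    thus ?thesis using bc by (simp add: h1_def Hf_def Let_def)
  qed
  have hper: "h2 (y,l3) = h2 (y,0)" if y: "y \<in> {a..b}" for y
    using U_per perUz per(3) per(4) y unfolding zperiodic_def h2_def
    by (metis add_0)
  have I0: "integral (cbox (a,0) (b,l3)) (\<lambda>x. h1y x + h2z x) = 0"
    by (rule ibp[OF less_imp_le[OF ab] less_imp_le[OF l3] continuous_on_subset[OF c1 cell_sub]
           continuous_on_subset[OF c2 cell_sub] d1 d2 wall hper])
  have pnz: "\<exists>q\<in>strip a b. p q \<noteq> 0"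
  proof (rule ccontr)
    assume "\<not> ?thesis"
    hence p0: "\<And>q. q \<in> strip a b \<Longrightarrow> p q = 0" by auto
    have py0: "Dp 1 0 (y,z) = 0" if y: "y \<in> {a..b}" for y z
    proof -
      have "((\<lambda>t. p (t,z)) has_vector_derivative 0) (at y within {a..b})"
        by (rule has_vector_derivative_transform_within[OF has_vector_derivative_const zero_less_one y])
           (use p0 in \<open>auto simp: strip_def\<close>)
      thus ?thesis using dpy[OF y] vector_derivative_within_closed_interval[OF ab y] by metis
    qed
    have pz0: "Dp 0 1 (y,z) = 0" if y: "y \<in> {a..b}" for y z
    proof -
      have "(\<lambda>t. p (y,t)) = (\<lambda>t. 0)" using p0 y by (auto simp: strip_def)
      hence "((\<lambda>t. p (y,t)) has_vector_derivative 0) (at z)" by simp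
      thus ?thesis using dpz[OF y] vector_derivative_unique_at by metis
    qed
    have "u q = 0 \<and> v q = 0 \<and> w q = 0 \<and> p q = 0" if q: "q \<in> strip a b" for q
    proof -
      obtain y z where qq: "q = (y,z)" and y: "y \<in> {a..b}" using q by (cases q) (auto simp: strip_def)
      have nz: "\<i> * of_real k * (of_real (U q) - c) \<noteq> 0" using k Wne by simp
      have "\<i> * of_real k * (of_real (U q) - c) * v q = 0" using eq2[rule_format, OF q] Fp[OF q] py0[OF y] qq by simp
      hence v0: "v q = 0" using nz by simp
      have "\<i> * of_real k * (of_real (U q) - c) * w q = 0" using eq3[rule_format, OF q] Fp[OF q] pz0[OF y] qq by simp
      hence w0: "w q = 0" using nz by simp
      have "\<i> * of_real k * (of_real (U q) - c) * u q = 0" using eq1[rule_format, OF q] v0 w0 p0[OF q] by simp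
      hence "u q = 0" using nz by simp
      thus ?thesis using v0 w0 p0[OF q] by simp
    qed
    thus False using nontriv by blast
  qed
  then obtain y0 z0 where y0: "y0 \<in> {a..b}" and pq: "p (y0,z0) \<noteq> 0" by (auto simp: strip_def)
  obtain z1 where z1: "z1 \<in> {0..l3}" and pz1: "p (y0,z1) = p (y0,z0)" using per_cell[OF l3 per(4) y0] by blast
  define q0 where "q0 = (y0,z1)"
  have q0: "q0 \<in> cbox (a,0) (b,l3)" "p q0 \<noteq> 0" using y0 z1 pz1 pq by (auto simp: q0_def)
  define M where "M = 2*A\<^sup>2/(Im c)\<^sup>2 + B/Im c"
  define \<psi> where "\<psi> = (\<lambda>q. (cmod (p q / (of_real (U q) - c)))\<^sup>2 * (k\<^sup>2 - M))"
  have bound: "\<psi> q \<le> h1y q + h2z q" if qc: "q \<in> cbox (a,0) (b,l3)" for q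
  proof -
    have q: "q \<in> strip a b" using qc cell_sub by blast
    have e2: "\<i> * of_real k * (of_real (U q) - c) * v q = - Dp 1 0 q" using eq2[rule_format, OF q] Fp[OF q] by simp
    have e3: "\<i> * of_real k * (of_real (U q) - c) * w q = - Dp 0 1 q" using eq3[rule_format, OF q] Fp[OF q] by simp
    have e1: "\<i> * of_real k * (of_real (U q) - c) * u q + v q * of_real (DU 1 0 q) + w q * of_real (DU 0 1 q)
         = - \<i> * of_real k * p q" using eq1[rule_format, OF q] FU[OF q] by simp
    have e4: "\<i> * of_real k * u q + Dv 1 0 q + Dw 0 1 q = 0" using eq4[rule_format, OF q] Fv[OF q] Fw[OF q] by simp
    have e14: "(of_real (U q) - c) * (Dv 1 0 q + Dw 0 1 q) = \<i> * of_real k * p q + v q * of_real (DU 1 0 q) + w q * of_real (DU 0 1 q)"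
    proof -
      have "(of_real (U q) - c) * (Dv 1 0 q + Dw 0 1 q) = (of_real (U q) - c) * (\<i> * of_real k * u q + Dv 1 0 q + Dw 0 1 q)
          - \<i> * of_real k * (of_real (U q) - c) * u q" by (simp add: algebra_simps)
      also have "\<dots> = - (\<i> * of_real k * (of_real (U q) - c) * u q)" using e4 by simp
      also have "\<dots> = \<i> * of_real k * p q + v q * of_real (DU 1 0 q) + w q * of_real (DU 0 1 q)"
        using e1 by (simp add: algebra_simps eq_neg_iff_add_eq_0 add_eq_0_iff)
      finally show ?thesis .
    qed
    show ?thesis
      using alg[OF ci e2 e3 e14 A0[OF q] B0[OF q]] unfolding \<psi>_def M_def h1y_def h2z_def by simp
  qed
  have cic: "Im c \<noteq> 0" using ci by simp
  show ?thesis
  proof (cases "k\<^sup>2 \<le> M")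
    case True
    have "k\<^sup>2 * (Im c)\<^sup>2 \<le> M * (Im c)\<^sup>2" by (rule mult_right_mono[OF True]) simp
    also have "M * (Im c)\<^sup>2 = 2 * A\<^sup>2 + B * Im c" using cic by (simp add: M_def field_simps power2_eq_square)
    finally show ?thesis by (simp add: power_mult_distrib)
  next
    case False
    have kM: "0 < k\<^sup>2 - M" using False by simp
    let ?C = "cbox (a,0) (b,l3)"
    have cpsi: "continuous_on ?C \<psi>"
      unfolding \<psi>_def
      by (intro continuous_on_subset[OF _ cell_sub] continuous_on_mult continuous_on_power continuous_on_norm
          continuous_on_divide continuous_on_diff continuous_on_of_real continuous_on_const cp(1) cU ballI Wne)
    have cg: "continuous_on ?C (\<lambda>x. h1y x + h2z x)"
      by (intro continuous_on_add continuous_on_subset[OF c1 cell_sub] continuous_on_subset[OF c2 cell_sub])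
    have psi0: "0 \<le> \<psi> x" for x using kM by (simp add: \<psi>_def)
    have "integral ?C \<psi> \<le> integral ?C (\<lambda>x. h1y x + h2z x)"
      by (rule integral_le[OF integrable_continuous[OF cpsi] integrable_continuous[OF cg] bound])
    hence "integral ?C \<psi> \<le> 0" using I0 by simp
    moreover have "0 \<le> integral ?C \<psi>" by (rule integral_nonneg[OF integrable_continuous[OF cpsi] psi0])
    ultimately have "integral ?C \<psi> = 0" by simp
    hence "(\<psi> has_integral 0) ?C" using integrable_integral[OF integrable_continuous[OF cpsi]] by simp
    hence "\<psi> q0 = 0" by (rule has_integral_0_cbox_imp_0[OF cpsi psi0 _ box_ne[OF ab l3] q0(1)])
    moreover have "\<psi> q0 \<noteq> 0" using q0(2) kM Wne by (simp add: \<psi>_def)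
    ultimately show ?thesis by simp
  qed
qed

end
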